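(* Let $0<p<1$, $G\sim D(n,p)$. Fix a tower vector $h=(h_1,\dots,h_s)$ of positive integers summing to $n$, and a tower decomposition $H=(H_1,\dots,H_s)$ (a partition of $\{1,\dots,n\}$ into ordered sets) with $|H_i|=h_i$. (a) $\Pr(h(G)=h) = w(h)/\sum_{h'} w(h')$, where the sum ranges over all tower vectors $h'$ (compositions of $n$) and $$w(h)=\binom{n}{h_1,\dots,h_s}\prod_{k=2}^{s}\frac{\left(1-(1-p)^{h_{k-1}}\right)^{h_k}}{(1-p)^{h_k\sum_{i=1}^{k-1}h_i}}.$$ (b) Conditional on the event that $H$ is the tower decomposition of $G$, the parent sets $\mathrm{Pa}(v)$, $v\in\{1,\dots,n\}$, are mutually independent; vertices $v\in H_1$ have $\mathrm{Pa}(v)=\emptyset$; and for $v\in H_j$ with $j\ge 2$ and $S\subseteq \bigcup_{i=1}^{j-1}H_i$, $$\Pr(\mathrm{Pa}(v)=S)=\begin{cases} C\left(\frac{p}{1-p}\right)^{|S|} & \text{if } S\cap H_{j-1}\ne\emptyset,\\ 0 & \text{otherwise,}\end{cases}$$ where $C$ is the normalizing constant (depending on $j$ and $H$), and $\Pr(\mathrm{Pa}(v)=S)=0$ for other $S$.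
   Context: $D(n,p)$ is the distribution on DAGs with vertex set $\{1,\dots,n\}$ assigning each DAG with $e$ edges probability proportional to $(p/(1-p))^e$. $\mathrm{Pa}(v)$ is the set of vertices $u$ with an edge $u\to v$; a source is a vertex with no parents. The tower decomposition of a DAG $G$ is $(H_1,\dots,H_s)$ where $H_1$ is the set of sources of $G$, $H_2$ the set of sources of $G$ with $H_1$ removed, $H_3$ the set of sources of $G$ with $H_1\cup H_2$ removed, etc., until all vertices are used; the tower vector is $h(G)=(|H_1|,\dots,|H_s|)$. $\binom{n}{h_1,\dots,h_s}$ is the multinomial coefficient. *)

theory Defs
  imports Complex_Main
begin

definition dags :: "nat \<Rightarrow> (nat \<times> nat) set set" where
  "dags n = {E. E \<subseteq> {1..n} \<times> {1..n} \<and> acyclic E}"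

definition dag_weight :: "real \<Rightarrow> (nat \<times> nat) set \<Rightarrow> real" where
  "dag_weight p E = (p / (1 - p)) ^ card E"

definition dag_prob :: "nat \<Rightarrow> real \<Rightarrow> ((nat \<times> nat) set \<Rightarrow> bool) \<Rightarrow> real" where
  "dag_prob n p P =
     (\<Sum>E\<in>{E\<in>dags n. P E}. dag_weight p E) / (\<Sum>E\<in>dags n. dag_weight p E)"

definition dag_cond_prob :: "nat \<Rightarrow> real \<Rightarrow> ((nat \<times> nat) set \<Rightarrow> bool)
    \<Rightarrow> ((nat \<times> nat) set \<Rightarrow> bool) \<Rightarrow> real" where
  "dag_cond_prob n p P Q = dag_prob n p (\<lambda>E. P E \<and> Q E) / dag_prob n p Q"

definition Pa :: "(nat \<times> nat) set \<Rightarrow> nat \<Rightarrow> nat set" where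
  "Pa E v = {u. (u, v) \<in> E}"

definition sources :: "nat set \<Rightarrow> (nat \<times> nat) set \<Rightarrow> nat set" where
  "sources V E = {v \<in> V. \<not> (\<exists>u\<in>V. (u, v) \<in> E)}"

definition is_tower :: "nat \<Rightarrow> (nat \<times> nat) set \<Rightarrow> nat set list \<Rightarrow> bool" where
  "is_tower n E Hs \<longleftrightarrow>
     (\<forall>k<length Hs. Hs ! k = sources ({1..n} - \<Union>(set (take k Hs))) E \<and> Hs ! k \<noteq> {})
     \<and> \<Union>(set Hs) = {1..n}"

definition has_tower_vector :: "nat \<Rightarrow> (nat \<times> nat) set \<Rightarrow> nat list \<Rightarrow> bool" where
  "has_tower_vector n E h \<longleftrightarrow> (\<exists>Hs. is_tower n E Hs \<and> map card Hs = h)"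

definition compositions :: "nat \<Rightarrow> nat list set" where
  "compositions n = {h. (\<forall>x\<in>set h. 0 < x) \<and> sum_list h = n}"

text \<open>Weight w(h); list indices are 0-based, so k = 1..s-1 here is k = 2..s in the paper.\<close>
definition tower_weight :: "nat \<Rightarrow> real \<Rightarrow> nat list \<Rightarrow> real" where
  "tower_weight n p h =
     (fact n / (\<Prod>i<length h. fact (h ! i))) *
     (\<Prod>k\<in>{1..<length h}.
        (1 - (1 - p) ^ (h ! (k - 1))) ^ (h ! k) / (1 - p) ^ (h ! k * sum_list (take k h)))"

end

theory Submission
  imports Defs "HOL-Library.FuncSet"
begin


lemma sum_Pow_power:
  fixes r :: real
  assumes "finite B"
  shows "(\<Sum>S\<in>Pow B. r ^ card S) = (1 + r) ^ card B"
  using assms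
proof (induction B rule: finite_induct)
  case empty
  then show ?case by simp
next
  case (insert x B)
  have inj: "inj_on (insert x) (Pow B)"
    using insert(2) by (smt (verit, best) PowD inj_onI insert_ident subset_iff)
  have disj: "Pow B \<inter> insert x ` Pow B = {}" using insert(2) by auto
  have fin: "finite (Pow B)" "finite (insert x ` Pow B)" using insert(1) by auto
  have "(\<Sum>S\<in>Pow (insert x B). r ^ card S) = (\<Sum>S\<in>Pow B. r ^ card S) + (\<Sum>S\<in>insert x ` Pow B. r ^ card S)"
    by (simp add: Pow_insert sum.union_disjoint[OF fin disj])
  also have "(\<Sum>S\<in>insert x ` Pow B. r ^ card S) = (\<Sum>S\<in>Pow B. r ^ card (insert x S))"
    by (simp add: sum.reindex[OF inj])
  also have "\<dots> = (\<Sum>S\<in>Pow B. r * r ^ card S)"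
  proof (rule sum.cong)
    fix S assume "S \<in> Pow B"
    then have "finite S" "x \<notin> S" using insert(1,2) finite_subset by auto
    then show "r ^ card (insert x S) = r * r ^ card S" by simp
  qed simp
  finally show ?case using insert by (simp add: sum_distrib_left[symmetric] algebra_simps)
qed

lemma sum_PiE_filter:
  fixes f :: "'a \<Rightarrow> 'b \<Rightarrow> real"
  assumes "finite I" "\<And>i. i \<in> I \<Longrightarrow> finite (A i)"
  shows "(\<Sum>g\<in>{g\<in>PiE I A. \<forall>i\<in>I. Q i (g i)}. \<Prod>i\<in>I. f i (g i))
       = (\<Prod>i\<in>I. \<Sum>x\<in>{x\<in>A i. Q i x}. f i x)"
proof -
  have "{g\<in>PiE I A. \<forall>i\<in>I. Q i (g i)} = PiE I (\<lambda>i. {x\<in>A i. Q i x})"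
    by (auto simp: PiE_def extensional_def)
  then show ?thesis using prod_sum_PiE[of I "\<lambda>i. {x\<in>A i. Q i x}" f] assms by simp
qed



definition dj :: "nat set list \<Rightarrow> bool" where
  "dj Hs \<longleftrightarrow> (\<forall>i<length Hs. \<forall>k<length Hs. i \<noteq> k \<longrightarrow> Hs ! i \<inter> Hs ! k = {})"

definition pt :: "nat \<Rightarrow> nat set list \<Rightarrow> bool" where
  "pt n Hs \<longleftrightarrow> dj Hs \<and> \<Union>(set Hs) = {1..n} \<and> (\<forall>k<length Hs. Hs ! k \<noteq> {})"

definition lev :: "nat set list \<Rightarrow> nat \<Rightarrow> nat" where
  "lev Hs v = (THE k. k < length Hs \<and> v \<in> Hs ! k)"

definition AL :: "nat set list \<Rightarrow> nat \<Rightarrow> nat set set" where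
  "AL Hs k = (if k = 0 then {{}} else {S. S \<subseteq> \<Union>(set (take k Hs)) \<and> S \<inter> Hs ! (k - 1) \<noteq> {}})"

definition edges :: "nat \<Rightarrow> (nat \<Rightarrow> nat set) \<Rightarrow> (nat \<times> nat) set" where
  "edges n g = {(u, v). v \<in> {1..n} \<and> u \<in> g v}"

lemma Union_take: "k \<le> length xs \<Longrightarrow> \<Union>(set (take k xs)) = (\<Union>i<k. xs ! i)"
proof -
  assume k: "k \<le> length xs"
  have "set (take k xs) = (\<lambda>i. xs ! i) ` {..<k}"
    using k by (auto simp: set_conv_nth image_def) (metis nth_take)+
  then show ?thesis by simp
qed

lemma lev_eq: "dj Hs \<Longrightarrow> k < length Hs \<Longrightarrow> v \<in> Hs ! k \<Longrightarrow> lev Hs v = k"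
  unfolding lev_def dj_def
  by (rule the_equality) blast+

lemma lev_ex:
  assumes "pt n Hs" "v \<in> {1..n}"
  shows "lev Hs v < length Hs \<and> v \<in> Hs ! lev Hs v"
proof -
  from assms obtain k where "k < length Hs" "v \<in> Hs ! k"
    unfolding pt_def by (metis UnionE in_set_conv_nth)
  then show ?thesis using lev_eq assms unfolding pt_def by metis
qed



lemma dj_disj: "dj Hs \<Longrightarrow> i < length Hs \<Longrightarrow> k < length Hs \<Longrightarrow> i \<noteq> k \<Longrightarrow> x \<in> Hs ! i \<Longrightarrow> x \<notin> Hs ! k"
  unfolding dj_def by blast

lemma tower_char_fwd:
  assumes pt: "pt n Hs" and tw: "is_tower n E Hs" and E: "E \<subseteq> {1..n} \<times> {1..n}" and v: "v \<in> {1..n}"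
  shows "Pa E v \<in> AL Hs (lev Hs v)"
proof -
  define k where "k = lev Hs v"
  have dj: "dj Hs" using pt pt_def by blast
  have kl: "k < length Hs" and vk: "v \<in> Hs ! k" using lev_ex[OF pt v] k_def by auto
  define R where "R j = {1..n} - \<Union>(set (take j Hs))" for j
  have src: "Hs ! j = sources (R j) E" if "j < length Hs" for j
    using tw that unfolding is_tower_def R_def by blast
  have vR: "v \<in> R k" using src[OF kl] vk unfolding sources_def by blast
  have sub: "Pa E v \<subseteq> \<Union>(set (take k Hs))"
  proof
    fix u assume "u \<in> Pa E v"
    then have "(u, v) \<in> E" by (simp add: Pa_def)
    moreover have "u \<in> {1..n}" using E calculation by blast
    ultimately show "u \<in> \<Union>(set (take k Hs))"
      using src[OF kl] vk unfolding sources_def R_def by blast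
  qed
  show ?thesis
  proof (cases "k = 0")
    case True
    then show ?thesis using sub by (simp add: AL_def k_def[symmetric])
  next
    case False
    have k1: "k - 1 < length Hs" using kl by simp
    have tk: "\<Union>(set (take k Hs)) = \<Union>(set (take (k-1) Hs)) \<union> Hs ! (k-1)"
    proof -
      have "take k Hs = take (k-1) Hs @ [Hs ! (k-1)]"
        using False k1 take_Suc_conv_app_nth[OF k1] by simp
      then show ?thesis by (simp add: Un_commute)
    qed
    have vR1: "v \<in> R (k-1)" using vR tk unfolding R_def by blast
    have "v \<notin> Hs ! (k-1)" using dj_disj[OF dj kl k1 _ vk] False by simp
    then obtain u where u: "u \<in> R (k-1)" "(u, v) \<in> E"
      using vR1 src[OF k1] unfolding sources_def by blast
    then have "u \<in> Pa E v" by (simp add: Pa_def)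
    then have "u \<in> Hs ! (k-1)" using sub u(1) tk unfolding R_def by blast
    then show ?thesis using sub False \<open>u \<in> Pa E v\<close> by (auto simp: AL_def k_def[symmetric])
  qed
qed



lemma tower_char_bwd:
  assumes pt: "pt n Hs" and E: "E \<subseteq> {1..n} \<times> {1..n}"
    and A: "\<forall>v\<in>{1..n}. Pa E v \<in> AL Hs (lev Hs v)"
  shows "E \<in> dags n \<and> is_tower n E Hs"
proof -
  have dj: "dj Hs" and un: "\<Union>(set Hs) = {1..n}" and ne: "\<forall>k<length Hs. Hs ! k \<noteq> {}"
    using pt pt_def by auto
  have inHs: "x \<in> Hs ! i \<Longrightarrow> i < length Hs \<Longrightarrow> x \<in> {1..n}" for x i
    using un nth_mem by blast
  have below: "\<exists>i<lev Hs v. u \<in> Hs ! i" if uv: "(u, v) \<in> E" for u v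
  proof -
    have v: "v \<in> {1..n}" using E uv by blast
    have lv: "lev Hs v < length Hs" using lev_ex[OF pt v] by simp
    have "u \<in> Pa E v" using uv by (simp add: Pa_def)
    moreover have "Pa E v \<in> AL Hs (lev Hs v)" using A v by blast
    ultimately have "lev Hs v \<noteq> 0 \<and> u \<in> \<Union>(set (take (lev Hs v) Hs))"
      unfolding AL_def by (cases "lev Hs v = 0") auto
    then show ?thesis using Union_take[of "lev Hs v" Hs] lv by auto
  qed
  have levlt: "lev Hs u < lev Hs v" if uv: "(u, v) \<in> E" for u v
  proof -
    obtain i where i: "i < lev Hs v" "u \<in> Hs ! i" using below[OF uv] by blast
    have v: "v \<in> {1..n}" using E uv by blast
    have lv: "lev Hs v < length Hs" using lev_ex[OF pt v] by simp
    have "lev Hs u = i" using lev_eq[OF dj _ i(2)] i(1) lv by simp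
    then show ?thesis using i by simp
  qed
  have "lev Hs x < lev Hs y" if "(x, y) \<in> E\<^sup>+" for x y
    using that by (induction rule: trancl_induct) (auto dest: levlt)
  then have "acyclic E" unfolding acyclic_def by blast
  then have dag: "E \<in> dags n" using E by (simp add: dags_def)
  have "Hs ! k = sources ({1..n} - \<Union>(set (take k Hs))) E" if kl: "k < length Hs" for k
  proof
    have tk: "\<Union>(set (take k Hs)) = (\<Union>i<k. Hs ! i)" using Union_take[of k Hs] kl by simp
    show "Hs ! k \<subseteq> sources ({1..n} - \<Union>(set (take k Hs))) E"
    proof
      fix v assume vk: "v \<in> Hs ! k"
      have v: "v \<in> {1..n}" using inHs[OF vk kl] .
      have lv: "lev Hs v = k" using lev_eq[OF dj kl vk] .
      have "v \<notin> (\<Union>i<k. Hs ! i)"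
      proof
        assume "v \<in> (\<Union>i<k. Hs ! i)"
        then obtain i where "i < k" "v \<in> Hs ! i" by blast
        then show False using dj_disj[OF dj _ kl _ \<open>v \<in> Hs ! i\<close>] vk kl by simp
      qed
      then have "v \<notin> \<Union>(set (take k Hs))" using tk by simp
      moreover have "\<not> (\<exists>u\<in>{1..n} - \<Union>(set (take k Hs)). (u, v) \<in> E)"
      proof
        assume "\<exists>u\<in>{1..n} - \<Union>(set (take k Hs)). (u, v) \<in> E"
        then obtain u where u: "u \<notin> \<Union>(set (take k Hs))" "(u, v) \<in> E" by blast
        obtain i where "i < k" "u \<in> Hs ! i" using below[OF u(2)] lv by auto
        then have "u \<in> (\<Union>i<k. Hs ! i)" by blast
        then show False using u(1) tk by simp
      qed
      ultimately show "v \<in> sources ({1..n} - \<Union>(set (take k Hs))) E"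
        using v by (simp add: sources_def)
    qed
    show "sources ({1..n} - \<Union>(set (take k Hs))) E \<subseteq> Hs ! k"
    proof
      fix v assume vs: "v \<in> sources ({1..n} - \<Union>(set (take k Hs))) E"
      then have v: "v \<in> {1..n}" and vn: "v \<notin> (\<Union>i<k. Hs ! i)"
        and nop: "\<And>u. u \<in> {1..n} \<Longrightarrow> u \<notin> (\<Union>i<k. Hs ! i) \<Longrightarrow> (u, v) \<notin> E"
        using tk by (auto simp: sources_def)
      define m where "m = lev Hs v"
      have ml: "m < length Hs" and vm: "v \<in> Hs ! m" using lev_ex[OF pt v] m_def by auto
      have "\<not> m < k" using vn vm by blast
      moreover have "\<not> m > k"
      proof
        assume mk: "k < m"
        then have "m \<noteq> 0" by simp
        moreover have "Pa E v \<in> AL Hs m" using A v m_def by blast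
        ultimately have "Pa E v \<inter> Hs ! (m - 1) \<noteq> {}" by (simp add: AL_def)
        then obtain u where u: "u \<in> Pa E v" "u \<in> Hs ! (m - 1)" by blast
        have m1: "m - 1 < length Hs" using ml by simp
        have "u \<in> {1..n}" using inHs[OF u(2) m1] .
        moreover have "u \<notin> (\<Union>i<k. Hs ! i)"
        proof
          assume "u \<in> (\<Union>i<k. Hs ! i)"
          then obtain i where "i < k" "u \<in> Hs ! i" by blast
          then show False using dj_disj[OF dj _ m1 _ \<open>u \<in> Hs ! i\<close>] u(2) mk kl by auto
        qed
        ultimately show False using nop u(1) by (simp add: Pa_def)
      qed
      ultimately show "v \<in> Hs ! k" using vm by (metis linorder_neqE_nat)
    qed
  qed
  then have "is_tower n E Hs" using ne un by (simp add: is_tower_def)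
  then show ?thesis using dag by simp
qed

lemma tower_char:
  assumes pt: "pt n Hs" and E: "E \<subseteq> {1..n} \<times> {1..n}"
  shows "(E \<in> dags n \<and> is_tower n E Hs) \<longleftrightarrow> (\<forall>v\<in>{1..n}. Pa E v \<in> AL Hs (lev Hs v))"
  using tower_char_fwd[OF pt _ E] tower_char_bwd[OF pt E] by blast



lemma AL_sub: "pt n Hs \<Longrightarrow> AL Hs k \<subseteq> Pow {1..n}"
proof -
  assume "pt n Hs"
  then have "\<Union>(set (take k Hs)) \<subseteq> {1..n}" unfolding pt_def using set_take_subset[of k Hs] by blast
  then show ?thesis unfolding AL_def Pow_def by (cases "k = 0") (simp_all, blast)
qed

lemma AL_finite: "pt n Hs \<Longrightarrow> finite (AL Hs k)"
  using AL_sub by (metis finite_Pow_iff finite_atLeastAtMost finite_subset)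

lemma Pa_edges: "v \<in> {1..n} \<Longrightarrow> Pa (edges n g) v = g v"
  by (auto simp: Pa_def edges_def)

lemma edges_bij:
  assumes pt: "pt n Hs"
  shows "bij_betw (edges n) (PiE {1..n} (\<lambda>v. AL Hs (lev Hs v))) {E \<in> dags n. is_tower n E Hs}"
proof (rule bij_betw_byWitness[where f' = "\<lambda>E. restrict (Pa E) {1..n}"])
  show "\<forall>g\<in>PiE {1..n} (\<lambda>v. AL Hs (lev Hs v)). restrict (Pa (edges n g)) {1..n} = g"
  proof
    fix g assume g: "g \<in> PiE {1..n} (\<lambda>v. AL Hs (lev Hs v))"
    show "restrict (Pa (edges n g)) {1..n} = g"
    proof
      fix v show "restrict (Pa (edges n g)) {1..n} v = g v"
        using g Pa_edges[of v n g] by (cases "v \<in> {1..n}") (auto simp: PiE_def extensional_def)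
    qed
  qed
  show "\<forall>E\<in>{E \<in> dags n. is_tower n E Hs}. edges n (restrict (Pa E) {1..n}) = E"
  proof
    fix E assume "E \<in> {E \<in> dags n. is_tower n E Hs}"
    then have sub: "E \<subseteq> {1..n} \<times> {1..n}" by (simp add: dags_def)
    show "edges n (restrict (Pa E) {1..n}) = E"
    proof (rule set_eqI)
      fix x :: "nat \<times> nat"
      obtain u v where x: "x = (u, v)" by (cases x)
      show "x \<in> edges n (restrict (Pa E) {1..n}) \<longleftrightarrow> x \<in> E"
        using sub unfolding x edges_def Pa_def by auto
    qed
  qed
  show "edges n ` PiE {1..n} (\<lambda>v. AL Hs (lev Hs v)) \<subseteq> {E \<in> dags n. is_tower n E Hs}"
  proof
    fix E assume "E \<in> edges n ` PiE {1..n} (\<lambda>v. AL Hs (lev Hs v))"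
    then obtain g where g: "g \<in> PiE {1..n} (\<lambda>v. AL Hs (lev Hs v))" and E: "E = edges n g" by blast
    have gs: "g v \<subseteq> {1..n}" if "v \<in> {1..n}" for v
    proof -
      have "g v \<in> AL Hs (lev Hs v)" using g that by (simp add: PiE_iff)
      then show ?thesis using AL_sub[OF pt] by blast
    qed
    have "E \<subseteq> {1..n} \<times> {1..n}"
    proof
      fix x assume "x \<in> E"
      then obtain u v where "x = (u, v)" "v \<in> {1..n}" "u \<in> g v" unfolding E edges_def by blast
      then show "x \<in> {1..n} \<times> {1..n}" using gs by blast
    qed
    moreover have "\<forall>v\<in>{1..n}. Pa E v \<in> AL Hs (lev Hs v)"
      using g Pa_edges E by (auto simp: PiE_def)
    ultimately show "E \<in> {E \<in> dags n. is_tower n E Hs}" using tower_char[OF pt] by blast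
  qed
  show "(\<lambda>E. restrict (Pa E) {1..n}) ` {E \<in> dags n. is_tower n E Hs} \<subseteq> PiE {1..n} (\<lambda>v. AL Hs (lev Hs v))"
  proof
    fix g assume "g \<in> (\<lambda>E. restrict (Pa E) {1..n}) ` {E \<in> dags n. is_tower n E Hs}"
    then obtain E where E: "E \<in> dags n" "is_tower n E Hs" and g: "g = restrict (Pa E) {1..n}" by blast
    have "E \<subseteq> {1..n} \<times> {1..n}" using E by (simp add: dags_def)
    then have "\<forall>v\<in>{1..n}. Pa E v \<in> AL Hs (lev Hs v)" using tower_char[OF pt] E by blast
    then show "g \<in> PiE {1..n} (\<lambda>v. AL Hs (lev Hs v))" using g by auto
  qed
qed

lemma card_edges:
  assumes "\<forall>v\<in>{1..n}. g v \<subseteq> {1..n}"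
  shows "card (edges n g) = (\<Sum>v\<in>{1..n}. card (g v))"
proof -
  have fin: "\<forall>v\<in>{1..n}. finite (g v)" using assms by (meson finite_atLeastAtMost finite_subset)
  have "edges n g = (\<Union>v\<in>{1..n}. (\<lambda>u. (u, v)) ` g v)" by (auto simp: edges_def)
  moreover have "card (\<Union>v\<in>{1..n}. (\<lambda>u. (u, v)) ` g v) = (\<Sum>v\<in>{1..n}. card ((\<lambda>u. (u, v)) ` g v))"
    by (rule card_UN_disjoint) (use fin in auto)
  moreover have "card ((\<lambda>u. (u, v)) ` g v) = card (g v)" for v
    by (rule card_image) (auto simp: inj_on_def)
  ultimately show ?thesis by simp
qed

lemma sum_tower_events:
  assumes pt: "pt n Hs"
    and PQ: "\<forall>g\<in>PiE {1..n} (\<lambda>v. AL Hs (lev Hs v)). P (edges n g) \<longleftrightarrow> (\<forall>v\<in>{1..n}. Q v (g v))"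
  shows "(\<Sum>E\<in>{E \<in> dags n. P E \<and> is_tower n E Hs}. dag_weight p E)
       = (\<Prod>v\<in>{1..n}. \<Sum>x\<in>{x \<in> AL Hs (lev Hs v). Q v x}. (p / (1 - p)) ^ card x)"
proof -
  let ?A = "PiE {1..n} (\<lambda>v. AL Hs (lev Hs v))"
  let ?G = "{g \<in> ?A. \<forall>v\<in>{1..n}. Q v (g v)}"
  have bij: "bij_betw (edges n) ?A {E \<in> dags n. is_tower n E Hs}" by (rule edges_bij[OF pt])
  have img: "{E \<in> dags n. P E \<and> is_tower n E Hs} = edges n ` ?G"
  proof
    show "{E \<in> dags n. P E \<and> is_tower n E Hs} \<subseteq> edges n ` ?G"
    proof
      fix E assume E: "E \<in> {E \<in> dags n. P E \<and> is_tower n E Hs}"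
      then have "E \<in> edges n ` ?A" using bij_betw_imp_surj_on[OF bij] by simp
      then obtain g where g: "g \<in> ?A" "E = edges n g" by blast
      then have "\<forall>v\<in>{1..n}. Q v (g v)" using PQ E by blast
      then have "g \<in> ?G" using g by blast
      then show "E \<in> edges n ` ?G" using g by blast
    qed
    show "edges n ` ?G \<subseteq> {E \<in> dags n. P E \<and> is_tower n E Hs}"
    proof
      fix E assume "E \<in> edges n ` ?G"
      then obtain g where g: "g \<in> ?A" "\<forall>v\<in>{1..n}. Q v (g v)" "E = edges n g" by blast
      have "E \<in> {E \<in> dags n. is_tower n E Hs}" using bij_betw_imp_surj_on[OF bij] g by blast
      moreover have "P E" using PQ g by blast
      ultimately show "E \<in> {E \<in> dags n. P E \<and> is_tower n E Hs}" by blast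
    qed
  qed
  have inj: "inj_on (edges n) ?G" using bij_betw_imp_inj_on[OF bij] by (rule inj_on_subset) auto
  have "(\<Sum>E\<in>{E \<in> dags n. P E \<and> is_tower n E Hs}. dag_weight p E) = (\<Sum>g\<in>?G. dag_weight p (edges n g))"
    unfolding img using sum.reindex[OF inj, of "dag_weight p"] by (simp add: o_def)
  also have "\<dots> = (\<Sum>g\<in>?G. \<Prod>v\<in>{1..n}. (p / (1 - p)) ^ card (g v))"
  proof (rule sum.cong)
    fix g assume "g \<in> ?G"
    then have "\<forall>v\<in>{1..n}. g v \<in> AL Hs (lev Hs v)" by (simp add: PiE_iff)
    then have "\<forall>v\<in>{1..n}. g v \<subseteq> {1..n}" using AL_sub[OF pt] by blast
    then show "dag_weight p (edges n g) = (\<Prod>v\<in>{1..n}. (p / (1 - p)) ^ card (g v))"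
      by (simp add: dag_weight_def card_edges power_sum)
  qed simp
  also have "\<dots> = (\<Prod>v\<in>{1..n}. \<Sum>x\<in>{x \<in> AL Hs (lev Hs v). Q v x}. (p / (1 - p)) ^ card x)"
    by (rule sum_PiE_filter) (simp_all add: AL_finite[OF pt])
  finally show ?thesis .
qed



lemma finite_dags: "finite (dags n)"
proof -
  have "dags n \<subseteq> Pow ({1..n} \<times> {1..n})" by (auto simp: dags_def)
  then show ?thesis by (rule finite_subset) simp
qed

lemma total_pos:
  assumes "0 < p" "p < 1"
  shows "0 < (\<Sum>E\<in>dags n. dag_weight p E)"
proof -
  have "{} \<in> dags n" by (simp add: dags_def acyclic_def)
  then show ?thesis using assms finite_dags
    by (intro sum_pos2[of _ "{}"]) (auto simp: dag_weight_def wf_acyclic)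
qed

lemma cond_prob_eq:
  fixes p :: real
  assumes "0 < p" "p < 1"
  shows "dag_cond_prob n p P Q
     = (\<Sum>E\<in>{E\<in>dags n. P E \<and> Q E}. dag_weight p E) / (\<Sum>E\<in>{E\<in>dags n. Q E}. dag_weight p E)"
  using total_pos[OF assms, of n] unfolding dag_cond_prob_def dag_prob_def
  by (simp add: field_simps)


lemma AL_pos:
  fixes p :: real
  assumes pt: "pt n Hs" and k: "k < length Hs" and p: "0 < p" "p < 1"
  shows "0 < (\<Sum>x\<in>AL Hs k. (p / (1 - p)) ^ card x)"
proof -
  have "\<exists>x. x \<in> AL Hs k"
  proof (cases "k = 0")
    case True then show ?thesis by (auto simp: AL_def)
  next
    case False
    have k1: "k - 1 < length Hs" using k by simp
    then obtain y where y: "y \<in> Hs ! (k - 1)" using pt unfolding pt_def by blast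
    have "Hs ! (k - 1) \<in> set (take k Hs)" using False k by (auto simp: in_set_conv_nth intro!: exI[of _ "k - 1"])
    then have "{y} \<in> AL Hs k" using y False by (auto simp: AL_def)
    then show ?thesis by blast
  qed
  then obtain x where "x \<in> AL Hs k" by blast
  have "0 < p / (1 - p)" using p by (intro divide_pos_pos) auto
  then show ?thesis
    by (intro sum_pos2[OF AL_finite[OF pt] \<open>x \<in> AL Hs k\<close>]) auto
qed

lemma cond_tower:
  assumes pt: "pt n Hs" and p: "0 < p" "p < 1"
    and PQ: "\<forall>g\<in>PiE {1..n} (\<lambda>v. AL Hs (lev Hs v)). P (edges n g) \<longleftrightarrow> (\<forall>v\<in>{1..n}. Q v (g v))"
  shows "dag_cond_prob n p P (\<lambda>E. is_tower n E Hs)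
    = (\<Prod>v\<in>{1..n}. \<Sum>x\<in>{x \<in> AL Hs (lev Hs v). Q v x}. (p / (1 - p)) ^ card x)
      / (\<Prod>v\<in>{1..n}. \<Sum>x\<in>AL Hs (lev Hs v). (p / (1 - p)) ^ card x)"
proof -
  have 1: "(\<Sum>E\<in>{E \<in> dags n. P E \<and> is_tower n E Hs}. dag_weight p E)
       = (\<Prod>v\<in>{1..n}. \<Sum>x\<in>{x \<in> AL Hs (lev Hs v). Q v x}. (p / (1 - p)) ^ card x)"
    by (rule sum_tower_events[OF pt PQ])
  have 2: "(\<Sum>E\<in>{E \<in> dags n. True \<and> is_tower n E Hs}. dag_weight p E)
       = (\<Prod>v\<in>{1..n}. \<Sum>x\<in>{x \<in> AL Hs (lev Hs v). True}. (p / (1 - p)) ^ card x)"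
    by (rule sum_tower_events[OF pt]) simp
  show ?thesis using 1 2 by (simp add: cond_prob_eq[OF p])
qed

lemma Z_pos:
  fixes p :: real
  assumes pt: "pt n Hs" and p: "0 < p" "p < 1" and v: "v \<in> {1..n}"
  shows "0 < (\<Sum>x\<in>AL Hs (lev Hs v). (p / (1 - p)) ^ card x)"
  using AL_pos[OF pt _ p] lev_ex[OF pt v] by blast

lemma marginal:
  assumes pt: "pt n Hs" and p: "0 < p" "p < 1" and v0: "v0 \<in> {1..n}"
  shows "dag_cond_prob n p (\<lambda>E. Pa E v0 = s) (\<lambda>E. is_tower n E Hs)
    = (if s \<in> AL Hs (lev Hs v0) then (p / (1 - p)) ^ card s else 0)
      / (\<Sum>x\<in>AL Hs (lev Hs v0). (p / (1 - p)) ^ card x)"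
proof -
  let ?Z = "\<lambda>v. \<Sum>x\<in>AL Hs (lev Hs v). (p / (1 - p)) ^ card x"
  let ?Q = "\<lambda>v x. v = v0 \<longrightarrow> x = s"
  have PQ: "\<forall>g\<in>PiE {1..n} (\<lambda>v. AL Hs (lev Hs v)). (Pa (edges n g) v0 = s) \<longleftrightarrow> (\<forall>v\<in>{1..n}. ?Q v (g v))"
    using Pa_edges[OF v0] v0 by auto
  have num: "(\<Prod>v\<in>{1..n}. \<Sum>x\<in>{x \<in> AL Hs (lev Hs v). ?Q v x}. (p / (1 - p)) ^ card x)
     = (if s \<in> AL Hs (lev Hs v0) then (p / (1 - p)) ^ card s else 0) * (\<Prod>v\<in>{1..n}-{v0}. ?Z v)"
  proof -
    have "(\<Prod>v\<in>{1..n}. \<Sum>x\<in>{x \<in> AL Hs (lev Hs v). ?Q v x}. (p / (1 - p)) ^ card x)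
      = (\<Sum>x\<in>{x \<in> AL Hs (lev Hs v0). ?Q v0 x}. (p / (1 - p)) ^ card x)
        * (\<Prod>v\<in>{1..n}-{v0}. \<Sum>x\<in>{x \<in> AL Hs (lev Hs v). ?Q v x}. (p / (1 - p)) ^ card x)"
      by (rule prod.remove) (use v0 in auto)
    also have "(\<Prod>v\<in>{1..n}-{v0}. \<Sum>x\<in>{x \<in> AL Hs (lev Hs v). ?Q v x}. (p / (1 - p)) ^ card x)
       = (\<Prod>v\<in>{1..n}-{v0}. ?Z v)"
      by (rule prod.cong) auto
    also have "{x \<in> AL Hs (lev Hs v0). ?Q v0 x} = (if s \<in> AL Hs (lev Hs v0) then {s} else {})"
      by auto
    finally show ?thesis by simp
  qed
  have den: "(\<Prod>v\<in>{1..n}. ?Z v) = ?Z v0 * (\<Prod>v\<in>{1..n}-{v0}. ?Z v)"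
    by (rule prod.remove) (use v0 in auto)
  have nz: "(\<Prod>v\<in>{1..n}-{v0}. ?Z v) \<noteq> 0"
    using Z_pos[OF pt p] by (simp add: prod_pos less_imp_neq[symmetric])
  have "dag_cond_prob n p (\<lambda>E. Pa E v0 = s) (\<lambda>E. is_tower n E Hs)
     = (if s \<in> AL Hs (lev Hs v0) then (p / (1 - p)) ^ card s else 0) * (\<Prod>v\<in>{1..n}-{v0}. ?Z v)
       / (?Z v0 * (\<Prod>v\<in>{1..n}-{v0}. ?Z v))"
    using cond_tower[OF pt p PQ] num den by simp
  also have "\<dots> = (if s \<in> AL Hs (lev Hs v0) then (p / (1 - p)) ^ card s else 0) / ?Z v0"
    using nz by simp
  finally show ?thesis .
qed

lemma joint:
  assumes pt: "pt n Hs" and p: "0 < p" "p < 1"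
  shows "dag_cond_prob n p (\<lambda>E. \<forall>v\<in>{1..n}. Pa E v = S v) (\<lambda>E. is_tower n E Hs)
    = (\<Prod>v\<in>{1..n}. dag_cond_prob n p (\<lambda>E. Pa E v = S v) (\<lambda>E. is_tower n E Hs))"
proof -
  let ?Z = "\<lambda>v. \<Sum>x\<in>AL Hs (lev Hs v). (p / (1 - p)) ^ card x"
  let ?Q = "\<lambda>v x. x = S v"
  have PQ: "\<forall>g\<in>PiE {1..n} (\<lambda>v. AL Hs (lev Hs v)). (\<forall>v\<in>{1..n}. Pa (edges n g) v = S v) \<longleftrightarrow> (\<forall>v\<in>{1..n}. ?Q v (g v))"
    using Pa_edges by auto
  have "dag_cond_prob n p (\<lambda>E. \<forall>v\<in>{1..n}. Pa E v = S v) (\<lambda>E. is_tower n E Hs)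
    = (\<Prod>v\<in>{1..n}. \<Sum>x\<in>{x \<in> AL Hs (lev Hs v). ?Q v x}. (p / (1 - p)) ^ card x) / (\<Prod>v\<in>{1..n}. ?Z v)"
    by (rule cond_tower[OF pt p PQ])
  also have "\<dots> = (\<Prod>v\<in>{1..n}. (\<Sum>x\<in>{x \<in> AL Hs (lev Hs v). ?Q v x}. (p / (1 - p)) ^ card x) / ?Z v)"
    by (rule prod_dividef[symmetric])
  also have "\<dots> = (\<Prod>v\<in>{1..n}. dag_cond_prob n p (\<lambda>E. Pa E v = S v) (\<lambda>E. is_tower n E Hs))"
  proof (rule prod.cong)
    fix v assume v: "v \<in> {1..n}"
    have "{x \<in> AL Hs (lev Hs v). ?Q v x} = (if S v \<in> AL Hs (lev Hs v) then {S v} else {})" by auto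
    then show "(\<Sum>x\<in>{x \<in> AL Hs (lev Hs v). ?Q v x}. (p / (1 - p)) ^ card x) / ?Z v
       = dag_cond_prob n p (\<lambda>E. Pa E v = S v) (\<lambda>E. is_tower n E Hs)"
      using marginal[OF pt p v] by simp
  qed simp
  finally show ?thesis .
qed



lemma source_exists:
  assumes E: "E \<in> dags n" and R: "R \<noteq> {}"
  shows "sources R E \<noteq> {}"
proof -
  have "finite E" using E finite_dags unfolding dags_def
    by (metis (no_types, lifting) finite_SigmaI finite_atLeastAtMost finite_subset mem_Collect_eq)
  moreover have "acyclic E" using E by (simp add: dags_def)
  ultimately have wf: "wf E" by (rule finite_acyclic_wf)
  from R obtain x where "x \<in> R" by blast
  from wfE_min[OF wf this] obtain z where "z \<in> R" "\<And>y. (y, z) \<in> E \<Longrightarrow> y \<notin> R" by blast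
  then have "z \<in> sources R E" by (auto simp: sources_def)
  then show ?thesis by blast
qed

lemma tower_exists_gen:
  assumes E: "E \<in> dags n"
  shows "\<exists>Hs. (\<forall>k<length Hs. Hs ! k = sources ({1..n} - D - \<Union>(set (take k Hs))) E \<and> Hs ! k \<noteq> {})
      \<and> {1..n} \<subseteq> D \<union> \<Union>(set Hs) \<and> \<Union>(set Hs) \<subseteq> {1..n}"
proof (induction "card ({1..n} - D)" arbitrary: D rule: less_induct)
  case less
  show ?case
  proof (cases "{1..n} - D = {}")
    case True
    then show ?thesis by (intro exI[of _ "[]"]) auto
  next
    case False
    define H0 where "H0 = sources ({1..n} - D) E"
    have H0ne: "H0 \<noteq> {}" using source_exists[OF E False] H0_def by simp
    have H0sub: "H0 \<subseteq> {1..n} - D" by (auto simp: H0_def sources_def)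
    have "card ({1..n} - (D \<union> H0)) < card ({1..n} - D)"
      using H0ne H0sub by (intro psubset_card_mono) auto
    from less(1)[OF this] obtain Hs where
      IH1: "\<forall>k<length Hs. Hs ! k = sources ({1..n} - (D \<union> H0) - \<Union>(set (take k Hs))) E \<and> Hs ! k \<noteq> {}"
      and IH2: "{1..n} \<subseteq> (D \<union> H0) \<union> \<Union>(set Hs)" and IH3: "\<Union>(set Hs) \<subseteq> {1..n}" by blast
    have "\<forall>k<length (H0 # Hs). (H0 # Hs) ! k = sources ({1..n} - D - \<Union>(set (take k (H0 # Hs)))) E \<and> (H0 # Hs) ! k \<noteq> {}"
    proof (intro allI impI)
      fix k assume k: "k < length (H0 # Hs)"
      show "(H0 # Hs) ! k = sources ({1..n} - D - \<Union>(set (take k (H0 # Hs)))) E \<and> (H0 # Hs) ! k \<noteq> {}"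
      proof (cases k)
        case 0
        then show ?thesis using H0ne by (simp add: H0_def)
      next
        case (Suc k')
        have eq: "{1..n} - D - \<Union>(set (take (Suc k') (H0 # Hs))) = {1..n} - (D \<union> H0) - \<Union>(set (take k' Hs))"
          by auto
        have k': "k' < length Hs" using Suc k by simp
        have "Hs ! k' = sources ({1..n} - (D \<union> H0) - \<Union>(set (take k' Hs))) E \<and> Hs ! k' \<noteq> {}"
          using IH1 k' by blast
        then show ?thesis unfolding Suc nth_Cons_Suc eq by blast
      qed
    qed
    moreover have "{1..n} \<subseteq> D \<union> \<Union>(set (H0 # Hs))" using IH2 by auto
    moreover have "\<Union>(set (H0 # Hs)) \<subseteq> {1..n}" using IH3 H0sub by auto
    ultimately show ?thesis by blast
  qed
qed

lemma tower_exists: "E \<in> dags n \<Longrightarrow> \<exists>Hs. is_tower n E Hs"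
  using tower_exists_gen[of E n "{}"] unfolding is_tower_def by auto

lemma tower_unique:
  assumes A: "is_tower n E A" and B: "is_tower n E B"
  shows "A = B"
proof -
  have tk: "take k A = take k B" if "k \<le> min (length A) (length B)" for k
    using that
  proof (induction k)
    case 0 then show ?case by simp
  next
    case (Suc k)
    have kA: "k < length A" and kB: "k < length B" using Suc.prems by auto
    have "A ! k = B ! k"
      using A B kA kB Suc.IH Suc.prems unfolding is_tower_def by simp
    then show ?case using Suc.IH Suc.prems take_Suc_conv_app_nth[OF kA] take_Suc_conv_app_nth[OF kB] by simp
  qed
  have nolt: "\<not> length X < length Y" if X: "is_tower n E X" and Y: "is_tower n E Y"
    and t: "take (length X) Y = X" for X Y
  proof
    assume lt: "length X < length Y"
    have "\<Union>(set (take (length X) Y)) = {1..n}" using t X by (simp add: is_tower_def)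
    moreover have "Y ! length X = sources ({1..n} - \<Union>(set (take (length X) Y))) E"
      using Y lt unfolding is_tower_def by blast
    ultimately have "Y ! length X = sources {} E" by simp
    moreover have "Y ! length X \<noteq> {}" using Y lt unfolding is_tower_def by blast
    ultimately show False by (simp add: sources_def)
  qed
  have "\<not> length A < length B"
  proof
    assume lt: "length A < length B"
    then have "take (length A) B = A" using tk[of "length A"] by simp
    then show False using nolt[OF A B] lt by blast
  qed
  moreover have "\<not> length B < length A"
  proof
    assume lt: "length B < length A"
    then have "take (length B) A = B" using tk[of "length B"] by simp
    then show False using nolt[OF B A] lt by blast
  qed
  ultimately have "length A = length B" by simp
  then show ?thesis using tk[of "length A"] by simp
qed

lemma tower_pt:
  assumes tw: "is_tower n E Hs"
  shows "pt n Hs"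
proof -
  have sub: "Hs ! k \<subseteq> {1..n} - \<Union>(set (take k Hs))" if "k < length Hs" for k
    using tw that unfolding is_tower_def sources_def by blast
  have "dj Hs" unfolding dj_def
  proof (intro allI impI)
    fix i k assume i: "i < length Hs" and k: "k < length Hs" and ik: "i \<noteq> k"
    have mem: "Hs ! a \<subseteq> \<Union>(set (take b Hs))" if "a < b" "b < length Hs" for a b
    proof -
      have "Hs ! a \<in> set (take b Hs)" using that by (auto simp: in_set_conv_nth intro!: exI[of _ a])
      then show ?thesis by blast
    qed
    show "Hs ! i \<inter> Hs ! k = {}"
    proof (cases "i < k")
      case True then show ?thesis using mem[OF True k] sub[OF k] by blast
    next
      case False then have "k < i" using ik by simp
      then show ?thesis using mem[OF _ i] sub[OF i] by blast
    qed
  qed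
  then show ?thesis using tw unfolding pt_def is_tower_def by blast
qed



definition partA :: "nat set \<Rightarrow> nat list \<Rightarrow> nat set list \<Rightarrow> bool" where
  "partA A h Hs \<longleftrightarrow> dj Hs \<and> \<Union>(set Hs) = A \<and> map card Hs = h"

lemma dj_Nil: "dj []" by (simp add: dj_def)

lemma dj_Cons: "dj (X # Hs) \<longleftrightarrow> dj Hs \<and> (\<forall>Y\<in>set Hs. X \<inter> Y = {})"
proof
  assume d: "dj (X # Hs)"
  have "dj Hs" unfolding dj_def
  proof (intro allI impI)
    fix i k assume "i < length Hs" "k < length Hs" "i \<noteq> k"
    then show "Hs ! i \<inter> Hs ! k = {}" using d[unfolded dj_def, rule_format, of "Suc i" "Suc k"] by simp
  qed
  moreover have "\<forall>Y\<in>set Hs. X \<inter> Y = {}"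
  proof
    fix Y assume "Y \<in> set Hs"
    then obtain k where "k < length Hs" "Y = Hs ! k" by (auto simp: in_set_conv_nth)
    then show "X \<inter> Y = {}" using d[unfolded dj_def, rule_format, of 0 "Suc k"] by simp
  qed
  ultimately show "dj Hs \<and> (\<forall>Y\<in>set Hs. X \<inter> Y = {})" by blast
next
  assume a: "dj Hs \<and> (\<forall>Y\<in>set Hs. X \<inter> Y = {})"
  show "dj (X # Hs)" unfolding dj_def
  proof (intro allI impI)
    fix i k assume i: "i < length (X # Hs)" and k: "k < length (X # Hs)" and ik: "i \<noteq> k"
    show "(X # Hs) ! i \<inter> (X # Hs) ! k = {}"
    proof (cases i)
      case 0
      then obtain k' where "k = Suc k'" using ik by (cases k) auto
      then show ?thesis using a 0 k by auto
    next
      case (Suc i')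
      show ?thesis
      proof (cases k)
        case 0
        then show ?thesis using a Suc i by auto
      next
        case (Suc k')
        then show ?thesis using a \<open>i = Suc i'\<close> i k ik unfolding dj_def by auto
      qed
    qed
  qed
qed

lemma finite_parts: "finite A \<Longrightarrow> finite {Hs. partA A h Hs}"
proof -
  assume A: "finite A"
  have "{Hs. partA A h Hs} \<subseteq> {xs. set xs \<subseteq> Pow A \<and> length xs = length h}"
  proof
    fix Hs assume "Hs \<in> {Hs. partA A h Hs}"
    then have "\<Union>(set Hs) = A" "map card Hs = h" by (auto simp: partA_def)
    then have "set Hs \<subseteq> Pow A" "length Hs = length h" by (blast, metis length_map)
    then show "Hs \<in> {xs. set xs \<subseteq> Pow A \<and> length xs = length h}" by simp
  qed
  moreover have "finite {xs. set xs \<subseteq> Pow A \<and> length xs = length h}"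
    using A by (intro finite_lists_length_eq) simp
  ultimately show ?thesis by (rule finite_subset)
qed

lemma count_parts:
  assumes "finite A" "\<forall>x\<in>set h. 0 < x" "sum_list h = card A"
  shows "real (card {Hs. partA A h Hs}) = fact (card A) / (\<Prod>i<length h. fact (h ! i))"
  using assms
proof (induction h arbitrary: A)
  case Nil
  then have "A = {}" by simp
  then have "{Hs. partA A [] Hs} = {[]}" by (auto simp: partA_def dj_Nil)
  then show ?case using \<open>A = {}\<close> by simp
next
  case (Cons a h)
  let ?X = "{X. X \<subseteq> A \<and> card X = a}"
  have seteq: "{Hs. partA A (a # h) Hs} = (\<Union>X\<in>?X. (Cons X) ` {Hs. partA (A - X) h Hs})"
  proof
    show "{Hs. partA A (a # h) Hs} \<subseteq> (\<Union>X\<in>?X. (Cons X) ` {Hs. partA (A - X) h Hs})"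
    proof
      fix Hs assume "Hs \<in> {Hs. partA A (a # h) Hs}"
      then have P: "partA A (a # h) Hs" by simp
      then obtain X Hs' where Hs: "Hs = X # Hs'" unfolding partA_def by (cases Hs) auto
      have d: "dj Hs'" "\<forall>Y\<in>set Hs'. X \<inter> Y = {}" using P Hs dj_Cons by (auto simp: partA_def)
      have u: "X \<union> \<Union>(set Hs') = A" and c: "card X = a" "map card Hs' = h" using P Hs by (auto simp: partA_def)
      have "\<Union>(set Hs') = A - X" using u d(2) by blast
      then have "partA (A - X) h Hs'" using d c by (simp add: partA_def)
      moreover have "X \<in> ?X" using u c by blast
      ultimately show "Hs \<in> (\<Union>X\<in>?X. (Cons X) ` {Hs. partA (A - X) h Hs})" using Hs by blast
    qed
    show "(\<Union>X\<in>?X. (Cons X) ` {Hs. partA (A - X) h Hs}) \<subseteq> {Hs. partA A (a # h) Hs}"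
    proof
      fix Hs assume "Hs \<in> (\<Union>X\<in>?X. (Cons X) ` {Hs. partA (A - X) h Hs})"
      then obtain X Hs' where X: "X \<subseteq> A" "card X = a" and P: "partA (A - X) h Hs'" and Hs: "Hs = X # Hs'"
        by blast
      have "dj Hs" using P Hs dj_Cons unfolding partA_def by auto
      moreover have "\<Union>(set Hs) = A" using P Hs X unfolding partA_def by auto
      ultimately show "Hs \<in> {Hs. partA A (a # h) Hs}" using P Hs X by (simp add: partA_def)
    qed
  qed
  have "?X \<subseteq> Pow A" by auto
  then have finX: "finite ?X" using Cons.prems(1) by (simp add: finite_subset)
  have card_eq: "card {Hs. partA A (a # h) Hs} = (\<Sum>X\<in>?X. card ((Cons X) ` {Hs. partA (A - X) h Hs}))"
    unfolding seteq
    by (rule card_UN_disjoint[OF finX]) (use Cons.prems(1) finite_parts in auto)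
  have each: "real (card ((Cons X) ` {Hs. partA (A - X) h Hs})) = fact (card A - a) / (\<Prod>i<length h. fact (h ! i))"
    if X: "X \<in> ?X" for X
  proof -
    have fin: "finite X" using X Cons.prems(1) finite_subset by blast
    have cA: "card (A - X) = card A - a" using X fin by (simp add: card_Diff_subset)
    have "real (card {Hs. partA (A - X) h Hs}) = fact (card (A - X)) / (\<Prod>i<length h. fact (h ! i))"
      using Cons.IH[of "A - X"] Cons.prems cA by simp
    then show ?thesis using cA by (simp add: card_image inj_on_def)
  qed
  have ale: "a \<le> card A" using Cons.prems(3) by simp
  have "real (card {Hs. partA A (a # h) Hs}) = (\<Sum>X\<in>?X. fact (card A - a) / (\<Prod>i<length h. fact (h ! i)))"
    unfolding card_eq of_nat_sum using each by simp
  also have "\<dots> = real (card A choose a) * (fact (card A - a) / (\<Prod>i<length h. fact (h ! i)))"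
    using n_subsets[OF Cons.prems(1), of a] by simp
  also have "\<dots> = fact (card A) / (fact a * (\<Prod>i<length h. fact (h ! i)))"
    by (simp add: binomial_fact[OF ale])
  also have "fact a * (\<Prod>i<length h. fact (h ! i)) = (\<Prod>i<length (a # h). fact ((a # h) ! i))"
    by (simp only: length_Cons prod.lessThan_Suc_shift nth_Cons_0 nth_Cons_Suc)
  finally show ?case .
qed



lemma card_Union_take:
  assumes "dj Hs" "\<forall>k<length Hs. finite (Hs ! k)" "k \<le> length Hs"
  shows "card (\<Union>(set (take k Hs))) = sum_list (take k (map card Hs))"
proof -
  have "card (\<Union>(set (take k Hs))) = card (\<Union>i<k. Hs ! i)" by (simp add: Union_take[OF assms(3)])
  also have "\<dots> = (\<Sum>i<k. card (Hs ! i))"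
    using assms by (intro card_UN_disjoint) (auto simp: dj_def)
  also have "\<dots> = sum_list (take k (map card Hs))"
    using assms(3) by (simp add: sum_list_sum_nth atLeast0LessThan min_absorb2)
  finally show ?thesis .
qed

lemma Z_formula:
  fixes p :: real
  assumes pt: "pt n Hs" and p: "0 < p" "p < 1" and k: "0 < k" "k < length Hs"
  shows "(\<Sum>x\<in>AL Hs k. (p / (1 - p)) ^ card x)
     = (1 - (1 - p) ^ card (Hs ! (k - 1))) / (1 - p) ^ sum_list (take k (map card Hs))"
proof -
  define B where "B = \<Union>(set (take k Hs))"
  define H where "H = Hs ! (k - 1)"
  let ?r = "p / (1 - p)"
  have k1: "k - 1 < length Hs" using k by simp
  have HB: "H \<subseteq> B"
  proof -
    have "Hs ! (k - 1) \<in> set (take k Hs)" using k by (auto simp: in_set_conv_nth intro!: exI[of _ "k - 1"])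
    then show ?thesis unfolding H_def B_def by blast
  qed
  have Bsub: "B \<subseteq> {1..n}" using pt set_take_subset[of k Hs] unfolding B_def pt_def by blast
  then have finB: "finite B" using finite_subset by blast
  have fin: "\<forall>k<length Hs. finite (Hs ! k)" using pt unfolding pt_def
    by (metis Union_upper finite_atLeastAtMost finite_subset nth_mem)
  have cB: "card B = sum_list (take k (map card Hs))"
    unfolding B_def using card_Union_take pt k fin unfolding pt_def by simp
  have AL: "AL Hs k = Pow B - Pow (B - H)" using k unfolding AL_def B_def H_def by auto
  have "(\<Sum>x\<in>AL Hs k. ?r ^ card x) = (\<Sum>x\<in>Pow B. ?r ^ card x) - (\<Sum>x\<in>Pow (B - H). ?r ^ card x)"
    unfolding AL using finB by (intro sum_diff) auto
  also have "\<dots> = (1 + ?r) ^ card B - (1 + ?r) ^ card (B - H)"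
    using finB by (simp add: sum_Pow_power)
  also have "card (B - H) = card B - card H" using HB finB by (meson card_Diff_subset finite_subset)
  also have "1 + ?r = 1 / (1 - p)" using p by (simp add: field_simps)
  also have "card H \<le> card B" using HB finB by (simp add: card_mono)
  then have "(1 / (1 - p)) ^ card B - (1 / (1 - p)) ^ (card B - card H) = (1 - (1 - p) ^ card H) / (1 - p) ^ card B"
  proof -
    assume le: "card H \<le> card B"
    have q: "0 < 1 - p" using p by simp
    have "(1 - p) ^ card B = (1 - p) ^ (card B - card H) * (1 - p) ^ card H"
      using le by (simp add: power_add[symmetric])
    then show ?thesis using q by (simp add: power_one_over field_simps)
  qed
  finally show ?thesis using cB H_def by simp
qed



definition prodw :: "real \<Rightarrow> nat list \<Rightarrow> real" where
  "prodw p h = (\<Prod>k\<in>{1..<length h}.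
        (1 - (1 - p) ^ (h ! (k - 1))) ^ (h ! k) / (1 - p) ^ (h ! k * sum_list (take k h)))"

lemma tower_weight_prodw: "tower_weight n p h = fact n / (\<Prod>i<length h. fact (h ! i)) * prodw p h"
  by (simp add: tower_weight_def prodw_def)

lemma pt_finite: "pt n Hs \<Longrightarrow> k < length Hs \<Longrightarrow> finite (Hs ! k)"
  unfolding pt_def by (metis Union_upper finite_atLeastAtMost finite_subset nth_mem)

lemma sum_T:
  fixes p :: real
  assumes pt: "pt n Hs" and p: "0 < p" "p < 1"
  shows "(\<Sum>E\<in>{E \<in> dags n. is_tower n E Hs}. dag_weight p E) = prodw p (map card Hs)"
proof -
  let ?r = "p / (1 - p)"
  let ?Z = "\<lambda>k. \<Sum>x\<in>AL Hs k. ?r ^ card x"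
  have dj: "dj Hs" using pt pt_def by blast
  have "(\<Sum>E\<in>{E \<in> dags n. True \<and> is_tower n E Hs}. dag_weight p E)
       = (\<Prod>v\<in>{1..n}. \<Sum>x\<in>{x \<in> AL Hs (lev Hs v). True}. ?r ^ card x)"
    by (rule sum_tower_events[OF pt]) simp
  then have "(\<Sum>E\<in>{E \<in> dags n. is_tower n E Hs}. dag_weight p E) = (\<Prod>v\<in>{1..n}. ?Z (lev Hs v))"
    by simp
  also have "{1..n} = (\<Union>k<length Hs. Hs ! k)"
    using pt Union_take[of "length Hs" Hs] unfolding pt_def by simp
  also have "(\<Prod>v\<in>(\<Union>k<length Hs. Hs ! k). ?Z (lev Hs v)) = (\<Prod>k<length Hs. \<Prod>v\<in>Hs ! k. ?Z (lev Hs v))"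
    using pt_finite[OF pt] dj by (intro prod.UNION_disjoint) (auto simp: dj_def)
  also have "\<dots> = (\<Prod>k<length Hs. ?Z k ^ card (Hs ! k))"
  proof (rule prod.cong)
    fix k assume "k \<in> {..<length Hs}"
    then have "\<forall>v\<in>Hs ! k. lev Hs v = k" using lev_eq[OF dj] by auto
    then show "(\<Prod>v\<in>Hs ! k. ?Z (lev Hs v)) = ?Z k ^ card (Hs ! k)" by simp
  qed simp
  also have "\<dots> = prodw p (map card Hs)"
  proof (cases "length Hs = 0")
    case True
    then show ?thesis by (simp add: prodw_def)
  next
    case False
    have "(\<Prod>k<length Hs. ?Z k ^ card (Hs ! k)) = ?Z 0 ^ card (Hs ! 0) * (\<Prod>k\<in>{1..<length Hs}. ?Z k ^ card (Hs ! k))"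
      using False by (simp add: lessThan_atLeast0 prod.atLeast_Suc_lessThan)
    also have "?Z 0 = 1" by (simp add: AL_def)
    also have "(\<Prod>k\<in>{1..<length Hs}. ?Z k ^ card (Hs ! k))
       = (\<Prod>k\<in>{1..<length Hs}. (1 - (1 - p) ^ (map card Hs ! (k - 1))) ^ (map card Hs ! k)
           / (1 - p) ^ (map card Hs ! k * sum_list (take k (map card Hs))))"
    proof (rule prod.cong)
      fix k assume k: "k \<in> {1..<length Hs}"
      have "?Z k = (1 - (1 - p) ^ card (Hs ! (k - 1))) / (1 - p) ^ sum_list (take k (map card Hs))"
        using Z_formula[OF pt p] k by simp
      show "?Z k ^ card (Hs ! k) = (1 - (1 - p) ^ (map card Hs ! (k - 1))) ^ (map card Hs ! k)
           / (1 - p) ^ (map card Hs ! k * sum_list (take k (map card Hs)))"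
      proof -
        have kk: "k < length Hs" "k - 1 < length Hs" using k by auto
        have m: "map card Hs ! k = card (Hs ! k)" "map card Hs ! (k - 1) = card (Hs ! (k - 1))"
          using kk by auto
        show ?thesis unfolding m \<open>?Z k = _\<close> by (simp add: power_divide power_mult[symmetric] mult.commute)
      qed
    qed simp
    finally show ?thesis by (simp add: prodw_def)
  qed
  finally show ?thesis .
qed



definition TV :: "nat \<Rightarrow> (nat \<times> nat) set \<Rightarrow> nat set list" where
  "TV n E = (THE Hs. is_tower n E Hs)"

lemma TV_tower: "E \<in> dags n \<Longrightarrow> is_tower n E (TV n E)"
  unfolding TV_def using tower_exists tower_unique by (metis theI)

lemma TV_eq: "is_tower n E Hs \<Longrightarrow> TV n E = Hs"
  unfolding TV_def using tower_unique by blast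

lemma htv_TV: "E \<in> dags n \<Longrightarrow> has_tower_vector n E h \<longleftrightarrow> map card (TV n E) = h"
  unfolding has_tower_vector_def using TV_tower TV_eq by metis

lemma length_le_sum_list: "\<forall>x\<in>set h. 0 < x \<Longrightarrow> length h \<le> sum_list (h :: nat list)"
  by (induction h) auto

lemma finite_compositions: "finite (compositions n)"
proof -
  have "compositions n \<subseteq> {xs. set xs \<subseteq> {0..n} \<and> length xs \<le> n}"
    unfolding compositions_def using length_le_sum_list member_le_sum_list by fastforce
  moreover have "finite {xs. set xs \<subseteq> {0..n} \<and> length xs \<le> n}"
    by (rule finite_lists_length_le) simp
  ultimately show ?thesis by (rule finite_subset)
qed

lemma tower_comp:
  assumes "is_tower n E Hs"
  shows "map card Hs \<in> compositions n"
proof -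
  have pt: "pt n Hs" by (rule tower_pt[OF assms])
  have pos: "\<forall>x\<in>set (map card Hs). 0 < x"
    using pt pt_finite[OF pt] unfolding pt_def by (auto simp: in_set_conv_nth card_gt_0_iff)
  have "card (\<Union>(set (take (length Hs) Hs))) = sum_list (take (length Hs) (map card Hs))"
    using pt pt_finite[OF pt] unfolding pt_def by (intro card_Union_take) auto
  then have "sum_list (map card Hs) = n" using pt unfolding pt_def by simp
  then show ?thesis using pos by (simp add: compositions_def)
qed

lemma partA_pt:
  assumes "partA {1..n} h Hs" "\<forall>x\<in>set h. 0 < x"
  shows "pt n Hs"
proof -
  have "\<forall>k<length Hs. Hs ! k \<noteq> {}"
  proof (intro allI impI)
    fix k assume k: "k < length Hs"
    have "map card Hs ! k \<in> set h" using assms(1) k unfolding partA_def by auto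
    then have "card (Hs ! k) > 0" using assms(2) k by auto
    then show "Hs ! k \<noteq> {}" by auto
  qed
  then show ?thesis using assms unfolding partA_def pt_def by blast
qed

lemma sum_htv:
  fixes p :: real
  assumes p: "0 < p" "p < 1" and h: "h \<in> compositions n"
  shows "(\<Sum>E\<in>{E \<in> dags n. has_tower_vector n E h}. dag_weight p E) = tower_weight n p h"
proof -
  let ?S = "{E \<in> dags n. has_tower_vector n E h}"
  let ?T = "{Hs. partA {1..n} h Hs}"
  have hpos: "\<forall>x\<in>set h. 0 < x" and hs: "sum_list h = n" using h by (auto simp: compositions_def)
  have finS: "finite ?S" using finite_dags by simp
  have finT: "finite ?T" by (rule finite_parts) simp
  have img: "TV n ` ?S \<subseteq> ?T"
  proof
    fix Hs assume "Hs \<in> TV n ` ?S"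
    then obtain E where E: "E \<in> dags n" "has_tower_vector n E h" and Hs: "Hs = TV n E" by blast
    have tw: "is_tower n E Hs" using TV_tower[OF E(1)] Hs by simp
    have "map card Hs = h" using htv_TV[OF E(1)] E(2) Hs by simp
    then show "Hs \<in> ?T" using tower_pt[OF tw] by (simp add: partA_def pt_def)
  qed
  have "(\<Sum>E\<in>?S. dag_weight p E) = (\<Sum>Hs\<in>?T. \<Sum>E\<in>{E. E \<in> ?S \<and> TV n E = Hs}. dag_weight p E)"
    by (rule sum.group[OF finS finT img, symmetric])
  also have "\<dots> = (\<Sum>Hs\<in>?T. prodw p h)"
  proof (rule sum.cong)
    fix Hs assume Hs: "Hs \<in> ?T"
    have pt: "pt n Hs" using partA_pt Hs hpos by blast
    have mc: "map card Hs = h" using Hs by (simp add: partA_def)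
    have "{E. E \<in> ?S \<and> TV n E = Hs} = {E \<in> dags n. is_tower n E Hs}"
    proof
      show "{E. E \<in> ?S \<and> TV n E = Hs} \<subseteq> {E \<in> dags n. is_tower n E Hs}"
        using TV_tower by auto
      show "{E \<in> dags n. is_tower n E Hs} \<subseteq> {E. E \<in> ?S \<and> TV n E = Hs}"
        using TV_eq mc htv_TV by auto
    qed
    then show "(\<Sum>E\<in>{E. E \<in> ?S \<and> TV n E = Hs}. dag_weight p E) = prodw p h"
      using sum_T[OF pt p] mc by simp
  qed simp
  also have "\<dots> = real (card ?T) * prodw p h" by simp
  also have "real (card ?T) = fact n / (\<Prod>i<length h. fact (h ! i))"
    using count_parts[of "{1..n}" h] hpos hs by simp
  finally show ?thesis by (simp add: tower_weight_prodw)
qed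

lemma sum_all:
  fixes p :: real
  assumes p: "0 < p" "p < 1"
  shows "(\<Sum>E\<in>dags n. dag_weight p E) = (\<Sum>h'\<in>compositions n. tower_weight n p h')"
proof -
  have img: "(\<lambda>E. map card (TV n E)) ` dags n \<subseteq> compositions n"
    using TV_tower tower_comp by blast
  have "(\<Sum>E\<in>dags n. dag_weight p E)
     = (\<Sum>h'\<in>compositions n. \<Sum>E\<in>{E. E \<in> dags n \<and> map card (TV n E) = h'}. dag_weight p E)"
    by (rule sum.group[OF finite_dags finite_compositions img, symmetric])
  also have "\<dots> = (\<Sum>h'\<in>compositions n. tower_weight n p h')"
  proof (rule sum.cong)
    fix h' assume h': "h' \<in> compositions n"
    have "{E. E \<in> dags n \<and> map card (TV n E) = h'} = {E \<in> dags n. has_tower_vector n E h'}"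
      using htv_TV by auto
    then show "(\<Sum>E\<in>{E. E \<in> dags n \<and> map card (TV n E) = h'}. dag_weight p E) = tower_weight n p h'"
      using sum_htv[OF p h'] by simp
  qed simp
  finally show ?thesis .
qed


theorem lemma3:
  fixes n :: nat and p :: real and h :: "nat list" and Hs :: "nat set list"
  assumes p0: "0 < p" and p1: "p < 1"
    and hpos: "\<forall>x\<in>set h. 0 < x" and hsum: "sum_list h = n"
    and Hlen: "length Hs = length h"
    and Hcard: "\<forall>i<length h. card (Hs ! i) = h ! i"
    and Hdisj: "\<forall>i<length Hs. \<forall>k<length Hs. i \<noteq> k \<longrightarrow> Hs ! i \<inter> Hs ! k = {}"
    and Hunion: "\<Union>(set Hs) = {1..n}"
  shows
    "dag_prob n p (\<lambda>E. has_tower_vector n E h)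
       = tower_weight n p h / (\<Sum>h'\<in>compositions n. tower_weight n p h')
     \<and> (\<forall>S :: nat \<Rightarrow> nat set.
          dag_cond_prob n p (\<lambda>E. \<forall>v\<in>{1..n}. Pa E v = S v) (\<lambda>E. is_tower n E Hs)
          = (\<Prod>v\<in>{1..n}. dag_cond_prob n p (\<lambda>E. Pa E v = S v) (\<lambda>E. is_tower n E Hs)))
     \<and> (\<forall>v. 0 < length Hs \<and> v \<in> Hs ! 0 \<longrightarrow> dag_cond_prob n p (\<lambda>E. Pa E v = {}) (\<lambda>E. is_tower n E Hs) = 1)
     \<and> (\<forall>j. 1 \<le> j \<and> j < length Hs \<longrightarrow>
          (\<exists>C::real. \<forall>v\<in>Hs ! j. \<forall>S.
             dag_cond_prob n p (\<lambda>E. Pa E v = S) (\<lambda>E. is_tower n E Hs)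
             = (if S \<subseteq> \<Union>(set (take j Hs)) \<and> S \<inter> Hs ! (j - 1) \<noteq> {}
                then C * (p / (1 - p)) ^ card S else 0)))"
  proof -
  have dj: "dj Hs" using Hdisj by (simp add: dj_def)
  have ne: "\<forall>k<length Hs. Hs ! k \<noteq> {}"
  proof (intro allI impI)
    fix k assume k: "k < length Hs"
    have "h ! k \<in> set h" using k Hlen by simp
    then have "card (Hs ! k) > 0" using hpos Hcard k Hlen by auto
    then show "Hs ! k \<noteq> {}" by auto
  qed
  have pt: "pt n Hs" using dj ne Hunion by (simp add: pt_def)
  have p: "0 < p" "p < 1" using p0 p1 by auto
  have hc: "h \<in> compositions n" using hpos hsum by (simp add: compositions_def)
  have inN: "v \<in> {1..n}" if "k < length Hs" "v \<in> Hs ! k" for k v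
    using that Hunion by (metis UnionI nth_mem)
  have A: "dag_prob n p (\<lambda>E. has_tower_vector n E h)
       = tower_weight n p h / (\<Sum>h'\<in>compositions n. tower_weight n p h')"
    unfolding dag_prob_def using sum_htv[OF p hc] sum_all[OF p] by simp
  have B: "\<forall>S :: nat \<Rightarrow> nat set.
          dag_cond_prob n p (\<lambda>E. \<forall>v\<in>{1..n}. Pa E v = S v) (\<lambda>E. is_tower n E Hs)
          = (\<Prod>v\<in>{1..n}. dag_cond_prob n p (\<lambda>E. Pa E v = S v) (\<lambda>E. is_tower n E Hs))"
    by (intro allI) (rule joint[OF pt p])
  have C: "\<forall>v. 0 < length Hs \<and> v \<in> Hs ! 0 \<longrightarrow> dag_cond_prob n p (\<lambda>E. Pa E v = {}) (\<lambda>E. is_tower n E Hs) = 1"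
  proof (intro allI impI)
    fix v assume v: "0 < length Hs \<and> v \<in> Hs ! 0"
    have vn: "v \<in> {1..n}" using inN v by blast
    have "lev Hs v = 0" using lev_eq[OF dj] v by blast
    then show "dag_cond_prob n p (\<lambda>E. Pa E v = {}) (\<lambda>E. is_tower n E Hs) = 1"
      using marginal[OF pt p vn, of "{}"] by (simp add: AL_def)
  qed
  have D: "\<forall>j. 1 \<le> j \<and> j < length Hs \<longrightarrow>
          (\<exists>C::real. \<forall>v\<in>Hs ! j. \<forall>S.
             dag_cond_prob n p (\<lambda>E. Pa E v = S) (\<lambda>E. is_tower n E Hs)
             = (if S \<subseteq> \<Union>(set (take j Hs)) \<and> S \<inter> Hs ! (j - 1) \<noteq> {}
                then C * (p / (1 - p)) ^ card S else 0))"
  proof (intro allI impI)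
    fix j assume j: "1 \<le> j \<and> j < length Hs"
    let ?Z = "\<Sum>x\<in>AL Hs j. (p / (1 - p)) ^ card x"
    show "\<exists>C::real. \<forall>v\<in>Hs ! j. \<forall>S.
             dag_cond_prob n p (\<lambda>E. Pa E v = S) (\<lambda>E. is_tower n E Hs)
             = (if S \<subseteq> \<Union>(set (take j Hs)) \<and> S \<inter> Hs ! (j - 1) \<noteq> {}
                then C * (p / (1 - p)) ^ card S else 0)"
    proof (intro exI[of _ "1 / ?Z"] ballI allI)
      fix v S assume v: "v \<in> Hs ! j"
      have vn: "v \<in> {1..n}" using inN v j by blast
      have lv: "lev Hs v = j" using lev_eq[OF dj] v j by blast
      have AL: "S \<in> AL Hs j \<longleftrightarrow> S \<subseteq> \<Union>(set (take j Hs)) \<and> S \<inter> Hs ! (j - 1) \<noteq> {}"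
        using j by (simp add: AL_def)
      show "dag_cond_prob n p (\<lambda>E. Pa E v = S) (\<lambda>E. is_tower n E Hs)
             = (if S \<subseteq> \<Union>(set (take j Hs)) \<and> S \<inter> Hs ! (j - 1) \<noteq> {}
                then 1 / ?Z * (p / (1 - p)) ^ card S else 0)"
        using marginal[OF pt p vn, of S] unfolding lv AL by simp
    qed
  qed
  show ?thesis by (rule conjI[OF A conjI[OF B conjI[OF C D]]])
qed

end
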